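(* Let $N$ be a natural number, and let $\mathcal{T}_N$ be the class of all finite digraphs $D$ whose vertex set can be written as a disjoint union $D_e\cup D_c\cup D_f$ such that: (i) the digraph induced on $D_e$ is empty, and is either reflexive or irreflexive; (ii) the digraph induced on $D_c$ is complete and reflexive (every ordered pair $(x,y)$ with $x,y\in D_c$, including $x=y$, is an edge); (iii) $|D_f|\le N$; (iv) the connections between $D_e$ and $D_c$ are uniform: for all $x,y\in D_e$ and all $z,t\in D_c$ we have $(x,z)\in E(D)\Leftrightarrow (y,t)\in E(D)$ and $(z,x)\in E(D)\Leftrightarrow (t,y)\in E(D)$. Then $\mathcal{T}_N$ is well quasi-ordered under both the (standard) homomorphic image ordering and the strong homomorphic image ordering.
   Context: A digraph is a set $D$ with a binary relation $E(D)\subseteq D\times D$ (pairs in $E(D)$ are edges; loops $(x,x)$ are allowed). A digraph is reflexive if all loops $(x,x)$ are edges, irreflexive if none are; it is empty if there is no edge $(x,y)$ with $x\neq y$. A map $\phi:D_1\to D_2$ is a homomorphism if $(x,y)\in E(D_1)$ implies $(\phi(x),\phi(y))\in E(D_2)$; it is strong if moreover $\{(\phi(x),\phi(y)):(x,y)\in E(D_1)\}$ equals $E(D_2)\cap(\phi(D_1)\times\phi(D_1))$. An epimorphism is a surjective homomorphism. The (standard) homomorphic image ordering is: $A\preceq B$ iff there is an epimorphism $B\to A$; the strong homomorphic image ordering: $A\preceq B$ iff there is a strong epimorphism $B\to A$. A class is well quasi-ordered (wqo) if it contains no infinite strictly decreasing sequence and no infinite antichain (set of pairwise incomparable elements); structures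 are considered up to isomorphism. *)

theory Defs
  imports Main
begin

text \<open>A (finite) digraph is represented by a vertex set V and an edge relation E
  with E a subset of V x V. Vertices are natural numbers (every finite digraph is
  isomorphic to one of this form).\<close>

type_synonym dgraph = "nat set \<times> (nat \<times> nat) set"

definition finite_digraph :: "dgraph \<Rightarrow> bool" where
  "finite_digraph D \<longleftrightarrow> finite (fst D) \<and> snd D \<subseteq> fst D \<times> fst D"

definition is_hom :: "dgraph \<Rightarrow> dgraph \<Rightarrow> (nat \<Rightarrow> nat) \<Rightarrow> bool" where
  "is_hom D1 D2 \<phi> \<longleftrightarrow> \<phi> ` fst D1 \<subseteq> fst D2 \<and>
     (\<forall>x y. (x, y) \<in> snd D1 \<longrightarrow> (\<phi> x, \<phi> y) \<in> snd D2)"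

definition is_strong_hom :: "dgraph \<Rightarrow> dgraph \<Rightarrow> (nat \<Rightarrow> nat) \<Rightarrow> bool" where
  "is_strong_hom D1 D2 \<phi> \<longleftrightarrow> is_hom D1 D2 \<phi> \<and>
     {(\<phi> x, \<phi> y) | x y. (x, y) \<in> snd D1} = snd D2 \<inter> (\<phi> ` fst D1 \<times> \<phi> ` fst D1)"

definition is_epi :: "dgraph \<Rightarrow> dgraph \<Rightarrow> (nat \<Rightarrow> nat) \<Rightarrow> bool" where
  "is_epi D1 D2 \<phi> \<longleftrightarrow> is_hom D1 D2 \<phi> \<and> \<phi> ` fst D1 = fst D2"

definition hom_img_le :: "dgraph \<Rightarrow> dgraph \<Rightarrow> bool" where
  "hom_img_le A B \<longleftrightarrow> (\<exists>\<phi>. is_epi B A \<phi>)"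

definition strong_hom_img_le :: "dgraph \<Rightarrow> dgraph \<Rightarrow> bool" where
  "strong_hom_img_le A B \<longleftrightarrow> (\<exists>\<phi>. is_epi B A \<phi> \<and> is_strong_hom B A \<phi>)"

definition wqo_class :: "'b set \<Rightarrow> ('b \<Rightarrow> 'b \<Rightarrow> bool) \<Rightarrow> bool" where
  "wqo_class C le \<longleftrightarrow>
     \<not> (\<exists>f::nat \<Rightarrow> 'b. (\<forall>n. f n \<in> C) \<and> (\<forall>n. le (f (Suc n)) (f n) \<and> \<not> le (f n) (f (Suc n)))) \<and>
     \<not> (\<exists>f::nat \<Rightarrow> 'b. (\<forall>n. f n \<in> C) \<and> (\<forall>i j. i \<noteq> j \<longrightarrow> \<not> le (f i) (f j)))"

definition class_T :: "nat \<Rightarrow> dgraph set" where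
  "class_T N = {D. finite_digraph D \<and>
     (\<exists>De Dc Df. De \<union> Dc \<union> Df = fst D \<and> De \<inter> Dc = {} \<and> De \<inter> Df = {} \<and> Dc \<inter> Df = {} \<and>
        (\<forall>x\<in>De. \<forall>y\<in>De. x \<noteq> y \<longrightarrow> (x, y) \<notin> snd D) \<and>
        ((\<forall>x\<in>De. (x, x) \<in> snd D) \<or> (\<forall>x\<in>De. (x, x) \<notin> snd D)) \<and>
        (\<forall>x\<in>Dc. \<forall>y\<in>Dc. (x, y) \<in> snd D) \<and>
        card Df \<le> N \<and>
        (\<forall>x\<in>De. \<forall>y\<in>De. \<forall>z\<in>Dc. \<forall>t\<in>Dc.
            ((x, z) \<in> snd D \<longleftrightarrow> (y, t) \<in> snd D) \<and> ((z, x) \<in> snd D \<longleftrightarrow> (t, y) \<in> snd D)))}"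

end

theory Submission
  imports Defs "HOL-Library.Ramsey" "HOL-Library.Infinite_Set"
begin

lemma surj_exists:
  assumes "finite X" "finite Y" "card Y \<le> card X" "Y = {} \<longrightarrow> X = {}"
  shows "\<exists>\<sigma>. \<sigma> ` X = Y"
proof (cases "X = {}")
  case True
  then have "Y = {}" using assms by (simp add: card_eq_0_iff)
  then show ?thesis using True by auto
next
  case False
  then have "Y \<noteq> {}" using assms by auto
  then obtain y0 where y0: "y0 \<in> Y" by auto
  obtain g where g: "g ` Y \<subseteq> X" "inj_on g Y" using card_le_inj[OF assms(2,1,3)] by auto
  define \<sigma> where "\<sigma> x = (if x \<in> g ` Y then the_inv_into Y g x else y0)" for x
  have "\<sigma> ` X \<subseteq> Y" using y0 g by (auto simp: \<sigma>_def the_inv_into_f_f)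
  moreover have "Y \<subseteq> \<sigma> ` X"
  proof
    fix y assume "y \<in> Y"
    then have "\<sigma> (g y) = y" using g by (auto simp: \<sigma>_def the_inv_into_f_f)
    then show "y \<in> \<sigma> ` X" using g \<open>y \<in> Y\<close> by (metis image_eqI image_subset_iff)
  qed
  ultimately show ?thesis by blast
qed

lemma key_surj:
  assumes "finite VA" "finite VB"
    and c: "\<And>\<kappa>. card {u\<in>VA. kA u = \<kappa>} \<le> card {x\<in>VB. kB x = \<kappa>} \<and>
        ({u\<in>VA. kA u = \<kappa>} = {} \<longrightarrow> {x\<in>VB. kB x = \<kappa>} = {})"
  shows "\<exists>\<phi>. \<phi> ` VB = VA \<and> (\<forall>x\<in>VB. kA (\<phi> x) = kB x)"
proof -
  have "\<exists>\<sigma>. \<sigma> ` {x\<in>VB. kB x = \<kappa>} = {u\<in>VA. kA u = \<kappa>}" for \<kappa>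
    using surj_exists[of "{x\<in>VB. kB x = \<kappa>}" "{u\<in>VA. kA u = \<kappa>}"] c[of \<kappa>] assms by auto
  then have "\<forall>\<kappa>. \<exists>\<sigma>. \<sigma> ` {x\<in>VB. kB x = \<kappa>} = {u\<in>VA. kA u = \<kappa>}" by blast
  then have "\<exists>\<sigma>. \<forall>\<kappa>. \<sigma> \<kappa> ` {x\<in>VB. kB x = \<kappa>} = {u\<in>VA. kA u = \<kappa>}" by (rule choice)
  then obtain \<sigma> where s: "\<And>\<kappa>. \<sigma> \<kappa> ` {x\<in>VB. kB x = \<kappa>} = {u\<in>VA. kA u = \<kappa>}" by blast
  define \<phi> where "\<phi> x = \<sigma> (kB x) x" for x
  have 1: "\<phi> x \<in> VA \<and> kA (\<phi> x) = kB x" if "x \<in> VB" for x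
  proof -
    have "\<phi> x \<in> \<sigma> (kB x) ` {y\<in>VB. kB y = kB x}" using that by (auto simp: \<phi>_def)
    then show ?thesis using s by blast
  qed
  have "VA \<subseteq> \<phi> ` VB"
  proof
    fix u assume "u \<in> VA"
    then have "u \<in> \<sigma> (kA u) ` {x\<in>VB. kB x = kA u}" using s by blast
    then obtain x where "x \<in> VB" "kB x = kA u" "u = \<sigma> (kA u) x" by auto
    then have "\<phi> x = u" by (simp add: \<phi>_def)
    then show "u \<in> \<phi> ` VB" using \<open>x \<in> VB\<close> by blast
  qed
  then show ?thesis using 1 by blast
qed

lemma generic_strong:
  assumes fA: "finite_digraph A" and fB: "finite_digraph B"
    and sur: "\<phi> ` fst B = fst A" and kp: "\<forall>x\<in>fst B. kA (\<phi> x) = kB x"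
    and eA: "\<forall>u\<in>fst A. \<forall>v\<in>fst A. (u,v) \<in> snd A \<longleftrightarrow> F (kA u) (kA v) (u = v)"
    and eB: "\<forall>u\<in>fst B. \<forall>v\<in>fst B. (u,v) \<in> snd B \<longleftrightarrow> F (kB u) (kB v) (u = v)"
    and mono: "\<forall>a b. F a b False \<longrightarrow> F a b True"
  shows "strong_hom_img_le A B"
proof -
  have EA: "snd A \<subseteq> fst A \<times> fst A" and EB: "snd B \<subseteq> fst B \<times> fst B"
    using fA fB by (auto simp: finite_digraph_def)
  have hom: "is_hom B A \<phi>"
    unfolding is_hom_def
  proof (intro conjI allI impI)
    show "\<phi> ` fst B \<subseteq> fst A" using sur by simp
    fix x y assume xy: "(x, y) \<in> snd B"
    then have x: "x \<in> fst B" and y: "y \<in> fst B" using EB by auto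
    have "F (kB x) (kB y) (x = y)" using eB x y xy by blast
    then have "F (kA (\<phi> x)) (kA (\<phi> y)) (\<phi> x = \<phi> y)" using kp x y mono
      by (metis (full_types))
    then show "(\<phi> x, \<phi> y) \<in> snd A" using eA x y sur by blast
  qed
  have "{(\<phi> x, \<phi> y) | x y. (x, y) \<in> snd B} = snd A \<inter> (\<phi> ` fst B \<times> \<phi> ` fst B)"
  proof
    show "{(\<phi> x, \<phi> y) | x y. (x, y) \<in> snd B} \<subseteq> snd A \<inter> (\<phi> ` fst B \<times> \<phi> ` fst B)"
      using hom EB unfolding is_hom_def by blast
  next
    show "snd A \<inter> (\<phi> ` fst B \<times> \<phi> ` fst B) \<subseteq> {(\<phi> x, \<phi> y) | x y. (x, y) \<in> snd B}"
    proof
      fix p assume p: "p \<in> snd A \<inter> (\<phi> ` fst B \<times> \<phi> ` fst B)"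
      obtain a b where ab: "p = (a, b)" by (cases p)
      obtain x where x: "x \<in> fst B" "\<phi> x = a" using p ab by auto
      obtain y where y: "y \<in> fst B" "\<phi> y = b" "a = b \<longrightarrow> y = x"
        using p ab x by auto
      have "a \<in> fst A" "b \<in> fst A" using p ab sur by auto
      then have "F (kA a) (kA b) (a = b)" using eA p ab by blast
      moreover have "(a = b) = (x = y)" using x y by auto
      moreover have "kA a = kB x" "kA b = kB y" using kp x y by auto
      ultimately have "F (kB x) (kB y) (x = y)" by simp
      then have "(x, y) \<in> snd B" using eB x y by blast
      then show "p \<in> {(\<phi> x, \<phi> y) | x y. (x, y) \<in> snd B}" using ab x y by blast
    qed
  qed
  then show ?thesis using hom sur unfolding strong_hom_img_le_def is_epi_def is_strong_hom_def by blast
qed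

definition valid :: "nat \<Rightarrow> dgraph \<Rightarrow> nat set \<Rightarrow> nat set \<Rightarrow> nat set \<Rightarrow> (nat \<Rightarrow> nat) \<Rightarrow> bool" where
  "valid N D De Dc Df b \<longleftrightarrow> finite_digraph D \<and>
     De \<union> Dc \<union> Df = fst D \<and> De \<inter> Dc = {} \<and> De \<inter> Df = {} \<and> Dc \<inter> Df = {} \<and>
        (\<forall>x\<in>De. \<forall>y\<in>De. x \<noteq> y \<longrightarrow> (x, y) \<notin> snd D) \<and>
        ((\<forall>x\<in>De. (x, x) \<in> snd D) \<or> (\<forall>x\<in>De. (x, x) \<notin> snd D)) \<and>
        (\<forall>x\<in>Dc. \<forall>y\<in>Dc. (x, y) \<in> snd D) \<and>
        card Df \<le> N \<and>
        (\<forall>x\<in>De. \<forall>y\<in>De. \<forall>z\<in>Dc. \<forall>t\<in>Dc.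
            ((x, z) \<in> snd D \<longleftrightarrow> (y, t) \<in> snd D) \<and> ((z, x) \<in> snd D \<longleftrightarrow> (t, y) \<in> snd D)) \<and>
     bij_betw b Df {0..<card Df}"

definition tau :: "dgraph \<Rightarrow> nat set \<Rightarrow> (nat \<Rightarrow> nat) \<Rightarrow> nat \<Rightarrow> nat set \<times> nat set" where
  "tau D Df b u = (b ` {w\<in>Df. (u,w) \<in> snd D}, b ` {w\<in>Df. (w,u) \<in> snd D})"

definition key :: "dgraph \<Rightarrow> nat set \<Rightarrow> nat set \<Rightarrow> (nat \<Rightarrow> nat) \<Rightarrow> nat \<Rightarrow> nat \<times> nat \<times> (nat set \<times> nat set)" where
  "key D De Df b u = (if u \<in> Df then (0, b u, ({},{})) else if u \<in> De then (1, 0, tau D Df b u)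
      else (2, 0, tau D Df b u))"

definition disc where
  "disc D De Dc Df b = (card Df, (\<lambda>(u,v). (b u, b v)) ` (snd D \<inter> Df \<times> Df),
     (\<forall>x\<in>De. (x,x) \<in> snd D), (\<exists>x\<in>De. \<exists>z\<in>Dc. (x,z) \<in> snd D), (\<exists>x\<in>De. \<exists>z\<in>Dc. (z,x) \<in> snd D),
     tau D Df b ` De, tau D Df b ` Dc)"

definition Fe :: "nat \<times> (nat \<times> nat) set \<times> bool \<times> bool \<times> bool \<times> (nat set \<times> nat set) set \<times> (nat set \<times> nat set) set
   \<Rightarrow> nat \<times> nat \<times> (nat set \<times> nat set) \<Rightarrow> nat \<times> nat \<times> (nat set \<times> nat set) \<Rightarrow> bool \<Rightarrow> bool" where
  "Fe d k1 k2 eq = (case d of (n, Ef, r, b1, b2, _, _) \<Rightarrow> case k1 of (c1, l1, t1) \<Rightarrow> case k2 of (c2, l2, t2) \<Rightarrow>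
     if c1 = 0 \<and> c2 = 0 then (l1, l2) \<in> Ef else if c1 = 0 then l1 \<in> snd t2 else if c2 = 0 then l2 \<in> fst t1
     else if c1 = 1 \<and> c2 = 1 then eq \<and> r else if c1 = 2 \<and> c2 = 2 then True else if c1 = 1 then b1 else b2)"

lemma Fe_mono: "Fe d a b False \<Longrightarrow> Fe d a b True"
  unfolding Fe_def by (auto split: prod.splits if_splits)

lemma validD:
  assumes "valid N D De Dc Df b"
  shows "finite_digraph D" "De \<union> Dc \<union> Df = fst D" "De \<inter> Dc = {}" "De \<inter> Df = {}" "Dc \<inter> Df = {}"
    "\<forall>x\<in>De. \<forall>y\<in>De. x \<noteq> y \<longrightarrow> (x, y) \<notin> snd D"
    "(\<forall>x\<in>De. (x, x) \<in> snd D) \<or> (\<forall>x\<in>De. (x, x) \<notin> snd D)"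
    "\<forall>x\<in>Dc. \<forall>y\<in>Dc. (x, y) \<in> snd D" "card Df \<le> N"
    "\<forall>x\<in>De. \<forall>y\<in>De. \<forall>z\<in>Dc. \<forall>t\<in>Dc.
            ((x, z) \<in> snd D \<longleftrightarrow> (y, t) \<in> snd D) \<and> ((z, x) \<in> snd D \<longleftrightarrow> (t, y) \<in> snd D)"
    "bij_betw b Df {0..<card Df}"
  using assms unfolding valid_def apply -
  apply (elim conjE, assumption)+
  done

lemma edge_char:
  assumes v: "valid N D De Dc Df b" and u: "u \<in> fst D" and w: "w \<in> fst D"
  shows "(u, w) \<in> snd D \<longleftrightarrow> Fe (disc D De Dc Df b) (key D De Df b u) (key D De Df b w) (u = w)"
proof -
  note vd = validD[OF v]
  have inj: "inj_on b Df" using vd(11) by (auto simp: bij_betw_def)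
  have cl: "u \<in> De \<or> u \<in> Dc \<or> u \<in> Df" "w \<in> De \<or> w \<in> Dc \<or> w \<in> Df" using vd(2) u w by auto
  note ee = vd(6) and rf = vd(7) and cc = vd(8) and unif = vd(10)
  show ?thesis
  proof (cases "u \<in> Df")
    case uf: True
    show ?thesis
    proof (cases "w \<in> Df")
      case True
      have "(b u, b w) \<in> (\<lambda>(u,v). (b u, b v)) ` (snd D \<inter> Df \<times> Df) \<longleftrightarrow> (u, w) \<in> snd D"
        using inj uf True by (auto simp: inj_on_eq_iff)
      then show ?thesis using uf True by (simp add: Fe_def disc_def key_def)
    next
      case False
      have "b u \<in> b ` {x\<in>Df. (x,w) \<in> snd D} \<longleftrightarrow> (u, w) \<in> snd D"
        using inj uf by (auto simp: inj_on_eq_iff)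
      then show ?thesis using uf False by (simp add: Fe_def disc_def key_def tau_def)
    qed
  next
    case unf: False
    show ?thesis
    proof (cases "w \<in> Df")
      case True
      have "b w \<in> b ` {x\<in>Df. (u,x) \<in> snd D} \<longleftrightarrow> (u, w) \<in> snd D"
        using inj True by (auto simp: inj_on_eq_iff)
      then show ?thesis using unf True by (simp add: Fe_def disc_def key_def tau_def)
    next
      case wnf: False
      have kn: "key D De Df b u = (if u \<in> De then 1 else 2, 0, tau D Df b u)"
              "key D De Df b w = (if w \<in> De then 1 else 2, 0, tau D Df b w)"
        using unf wnf by (auto simp: key_def)
      show ?thesis
      proof (cases "u \<in> De")
        case ue: True
        show ?thesis
        proof (cases "w \<in> De")
          case True
          have "(u, w) \<in> snd D \<longleftrightarrow> u = w \<and> (\<forall>x\<in>De. (x,x) \<in> snd D)"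
          proof (cases "u = w")
            case True
            then show ?thesis using rf ue by auto
          next
            case False
            then show ?thesis using ee ue \<open>w \<in> De\<close> by auto
          qed
          then show ?thesis using ue True kn by (simp add: Fe_def disc_def)
        next
          case False
          then have wc: "w \<in> Dc" using cl wnf by auto
          have "(u, w) \<in> snd D \<longleftrightarrow> (\<exists>x\<in>De. \<exists>z\<in>Dc. (x,z) \<in> snd D)"
          proof
            assume "\<exists>x\<in>De. \<exists>z\<in>Dc. (x,z) \<in> snd D"
            then obtain x z where "x \<in> De" "z \<in> Dc" "(x,z) \<in> snd D" by blast
            then show "(u, w) \<in> snd D" using unif[rule_format, of x u z w] ue wc by simp
          qed (use ue wc in blast)
          then show ?thesis using ue False kn by (simp add: Fe_def disc_def)
        qed
      next
        case False
        then have uc: "u \<in> Dc" using cl unf by auto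
        show ?thesis
        proof (cases "w \<in> De")
          case True
          have "(u, w) \<in> snd D \<longleftrightarrow> (\<exists>x\<in>De. \<exists>z\<in>Dc. (z,x) \<in> snd D)"
          proof
            assume "\<exists>x\<in>De. \<exists>z\<in>Dc. (z,x) \<in> snd D"
            then obtain x z where "x \<in> De" "z \<in> Dc" "(z,x) \<in> snd D" by blast
            then show "(u, w) \<in> snd D" using unif[rule_format, of x w z u] True uc by simp
          qed (use True uc in blast)
          then show ?thesis using True False kn by (simp add: Fe_def disc_def)
        next
          case wd: False
          then have "w \<in> Dc" using cl wnf by auto
          then have "(u, w) \<in> snd D" using cc uc by blast
          then show ?thesis using False wd kn by (simp add: Fe_def disc_def)
        qed
      qed
    qed
  qed
qed

lemma fiber:
  assumes v: "valid N D De Dc Df b"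
  shows "{u\<in>fst D. key D De Df b u = (c,l,t)} = (if c=0 then (if t=({},{}) then {u\<in>Df. b u = l} else {})
     else if c=1 then (if l=0 then {u\<in>De. tau D Df b u = t} else {})
     else if c=2 then (if l=0 then {u\<in>Dc. tau D Df b u = t} else {}) else {})"
proof -
  note vd = validD[OF v]
  show ?thesis using vd(2-5) by (auto simp: key_def)
qed

lemma lab_set:
  assumes v: "valid N D De Dc Df b"
  shows "{u\<in>Df. b u = l} = (if l < card Df then {inv_into Df b l} else {})"
proof -
  have bij: "bij_betw b Df {0..<card Df}" using validD[OF v] by blast
  show ?thesis
  proof (cases "l < card Df")
    case True
    then have "{u\<in>Df. b u = l} = {inv_into Df b l}"
      using bij by (auto simp: bij_betw_def inv_into_f_f) (metis atLeastLessThan_iff zero_le f_inv_into_f inv_into_into)+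
    then show ?thesis using True by simp
  next
    case False
    then have "{u\<in>Df. b u = l} = {}" using bij by (auto simp: bij_betw_def)
    then show ?thesis using False by simp
  qed
qed

lemma le_lemma:
  assumes vA: "valid N A Ae Ac Af bA" and vB: "valid N B Be Bc Bf bB"
    and d: "disc A Ae Ac Af bA = disc B Be Bc Bf bB"
    and cE: "\<And>t. card {u\<in>Ae. tau A Af bA u = t} \<le> card {u\<in>Be. tau B Bf bB u = t}"
    and cC: "\<And>t. card {u\<in>Ac. tau A Af bA u = t} \<le> card {u\<in>Bc. tau B Bf bB u = t}"
  shows "strong_hom_img_le A B"
proof -
  note va = validD[OF vA] and vb = validD[OF vB]
  have fA: "finite (fst A)" and fB: "finite (fst B)" using va(1) vb(1) by (auto simp: finite_digraph_def)
  have dd: "card Af = card Bf" "tau A Af bA ` Ae = tau B Bf bB ` Be" "tau A Af bA ` Ac = tau B Bf bB ` Bc"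
    using d by (auto simp: disc_def)
  have fin: "finite Af" "finite Ae" "finite Ac" "finite Bf" "finite Be" "finite Bc"
    using fA fB va(2) vb(2) by (auto intro: finite_subset)
  have cond: "card {u\<in>fst A. key A Ae Af bA u = \<kappa>} \<le> card {x\<in>fst B. key B Be Bf bB x = \<kappa>} \<and>
        ({u\<in>fst A. key A Ae Af bA u = \<kappa>} = {} \<longrightarrow> {x\<in>fst B. key B Be Bf bB x = \<kappa>} = {})" for \<kappa>
  proof -
    obtain c l t where k: "\<kappa> = (c, l, t)" by (cases \<kappa>) auto
    have ex: "{u\<in>X. g u = t} = {} \<longleftrightarrow> t \<notin> g ` X" for X and g :: "nat \<Rightarrow> nat set \<times> nat set" by auto
    have e1: "{u\<in>Ae. tau A Af bA u = t} = {} \<longleftrightarrow> {u\<in>Be. tau B Bf bB u = t} = {}"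
      using ex[of Ae "tau A Af bA"] ex[of Be "tau B Bf bB"] dd(2) by simp
    have e2: "{u\<in>Ac. tau A Af bA u = t} = {} \<longleftrightarrow> {u\<in>Bc. tau B Bf bB u = t} = {}"
      using ex[of Ac "tau A Af bA"] ex[of Bc "tau B Bf bB"] dd(3) by simp
    show ?thesis
    proof (cases "c = 0")
      case True
      then show ?thesis unfolding k fiber[OF vA] fiber[OF vB] lab_set[OF vA] lab_set[OF vB] dd(1) by simp
    next
      case c0: False
      show ?thesis
      proof (cases "c = 1")
        case True
        then show ?thesis unfolding k fiber[OF vA] fiber[OF vB] using cE[of t] e1 by simp
      next
        case False
        then show ?thesis unfolding k fiber[OF vA] fiber[OF vB] using c0 cC[of t] e2 by simp
      qed
    qed
  qed
  obtain \<phi> where phi: "\<phi> ` fst B = fst A" "\<forall>x\<in>fst B. key A Ae Af bA (\<phi> x) = key B Be Bf bB x"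
    using key_surj[OF fA fB cond] by blast
  show ?thesis
  proof (rule generic_strong[OF va(1) vb(1) phi, where F = "Fe (disc A Ae Ac Af bA)"])
    show "\<forall>u\<in>fst A. \<forall>v\<in>fst A. ((u, v) \<in> snd A) = Fe (disc A Ae Ac Af bA) (key A Ae Af bA u) (key A Ae Af bA v) (u = v)"
      using edge_char[OF vA] by blast
    show "\<forall>u\<in>fst B. \<forall>v\<in>fst B. ((u, v) \<in> snd B) = Fe (disc A Ae Ac Af bA) (key B Be Bf bB u) (key B Be Bf bB v) (u = v)"
      unfolding d using edge_char[OF vB] by blast
    show "\<forall>a b. Fe (disc A Ae Ac Af bA) a b False \<longrightarrow> Fe (disc A Ae Ac Af bA) a b True"
      using Fe_mono by blast
  qed
qed

lemma nat_no_desc: assumes "\<forall>n. (f::nat \<Rightarrow> nat) (Suc n) < f n" shows False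
proof -
  have "f n + n \<le> f 0" for n
  proof (induction n)
    case (Suc n)
    have "f (Suc n) < f n" using assms by blast
    then show ?case using Suc by linarith
  qed simp
  from this[of "Suc (f 0)"] show False by simp
qed

lemma epi_rev:
  assumes fA: "finite_digraph A" and fB: "finite_digraph B" and ep: "is_epi B A \<phi>"
    and cV: "card (fst A) = card (fst B)"
  shows "card (snd B) \<le> card (snd A)"
    and "card (snd B) = card (snd A) \<Longrightarrow> strong_hom_img_le B A"
proof -
  have VB: "finite (fst B)" and EB: "snd B \<subseteq> fst B \<times> fst B" using fB by (auto simp: finite_digraph_def)
  have VA: "finite (fst A)" and EA: "snd A \<subseteq> fst A \<times> fst A" using fA by (auto simp: finite_digraph_def)
  have im: "\<phi> ` fst B = fst A" and hom: "\<And>x y. (x,y) \<in> snd B \<Longrightarrow> (\<phi> x, \<phi> y) \<in> snd A"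
    using ep by (auto simp: is_epi_def is_hom_def)
  have "card (\<phi> ` fst B) = card (fst B)" using im cV by simp
  then have inj: "inj_on \<phi> (fst B)" by (rule eq_card_imp_inj_on[OF VB])
  let ?m = "map_prod \<phi> \<phi>"
  have injm: "inj_on ?m (snd B)"
  proof (rule inj_onI)
    fix p q assume pq: "p \<in> snd B" "q \<in> snd B" "?m p = ?m q"
    obtain x y x' y' where p: "p = (x,y)" and q: "q = (x',y')" by (cases p, cases q) auto
    have "x \<in> fst B" "y \<in> fst B" "x' \<in> fst B" "y' \<in> fst B" using pq p q EB by auto
    moreover have "\<phi> x = \<phi> x'" "\<phi> y = \<phi> y'" using pq(3) p q by auto
    ultimately show "p = q" using inj p q by (auto dest: inj_onD)
  qed
  have sub: "?m ` snd B \<subseteq> snd A" using hom by auto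
  have finEA: "finite (snd A)" using EA VA by (meson finite_SigmaI finite_subset)
  show c: "card (snd B) \<le> card (snd A)"
    using card_inj_on_le[OF injm sub finEA] .
  assume eq: "card (snd B) = card (snd A)"
  have imE: "?m ` snd B = snd A"
    using card_subset_eq[OF finEA sub] card_image[OF injm] eq by simp
  define \<psi> where "\<psi> = inv_into (fst B) \<phi>"
  have psi1: "\<psi> (\<phi> x) = x" if "x \<in> fst B" for x using inj that by (simp add: \<psi>_def)
  have psiV: "\<psi> ` fst A = fst B"
    using im psi1 by force
  have psiE: "{(\<psi> a, \<psi> b) | a b. (a, b) \<in> snd A} = snd B"
  proof
    show "{(\<psi> a, \<psi> b) | a b. (a, b) \<in> snd A} \<subseteq> snd B"
    proof
      fix p assume "p \<in> {(\<psi> a, \<psi> b) | a b. (a, b) \<in> snd A}"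
      then obtain a b where p: "p = (\<psi> a, \<psi> b)" "(a,b) \<in> snd A" by blast
      then obtain x y where "(x,y) \<in> snd B" "a = \<phi> x" "b = \<phi> y" using imE by force
      then show "p \<in> snd B" using p psi1 EB by auto
    qed
  next
    show "snd B \<subseteq> {(\<psi> a, \<psi> b) | a b. (a, b) \<in> snd A}"
    proof
      fix p assume p: "p \<in> snd B"
      obtain x y where xy: "p = (x,y)" by (cases p)
      have "(\<phi> x, \<phi> y) \<in> snd A" using hom p xy by simp
      moreover have "\<psi> (\<phi> x) = x" "\<psi> (\<phi> y) = y" using psi1 p xy EB by auto
      ultimately show "p \<in> {(\<psi> a, \<psi> b) | a b. (a, b) \<in> snd A}" using xy by force
    qed
  qed
  have "is_epi A B \<psi>" unfolding is_epi_def is_hom_def using psiV psiE by blast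
  moreover have "is_strong_hom A B \<psi>" unfolding is_strong_hom_def
    using psiE psiV EB \<open>is_epi A B \<psi>\<close> by (auto simp: is_epi_def)
  ultimately show "strong_hom_img_le B A" unfolding strong_hom_img_le_def by blast
qed

lemma strong_imp_hom: "strong_hom_img_le A B \<Longrightarrow> hom_img_le A B"
  unfolding strong_hom_img_le_def hom_img_le_def by blast

lemma epi_card: assumes "finite_digraph B" "is_epi B A \<phi>" shows "card (fst A) \<le> card (fst B)"
proof -
  have "finite (fst B)" "\<phi> ` fst B = fst A" using assms unfolding is_epi_def finite_digraph_def by auto
  then show ?thesis using card_image_le[of "fst B" \<phi>] by simp
qed

lemma strong_edges:
  assumes fA: "finite_digraph A" and fB: "finite_digraph B" and ep: "is_epi B A \<phi>"
    and st: "is_strong_hom B A \<phi>"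
  shows "card (snd A) \<le> card (snd B)"
proof -
  have EA: "snd A \<subseteq> fst A \<times> fst A" using fA by (auto simp: finite_digraph_def)
  have VB: "finite (fst B)" and EB: "snd B \<subseteq> fst B \<times> fst B" using fB by (auto simp: finite_digraph_def)
  have finEB: "finite (snd B)" using EB VB by (meson finite_SigmaI finite_subset)
  have 1: "{(\<phi> x, \<phi> y) | x y. (x, y) \<in> snd B} = snd A \<inter> (fst A \<times> fst A)"
    using st ep unfolding is_strong_hom_def is_epi_def by simp
  have 2: "snd A \<inter> (fst A \<times> fst A) = snd A" using EA by blast
  have 3: "{(\<phi> x, \<phi> y) | x y. (x, y) \<in> snd B} = (\<lambda>(x,y). (\<phi> x, \<phi> y)) ` snd B" by auto
  have "snd A = (\<lambda>(x,y). (\<phi> x, \<phi> y)) ` snd B" using 1 2 3 by simp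
  then show ?thesis using card_image_le[OF finEB] by simp
qed

lemma no_desc_hom:
  assumes mem: "\<forall>n. finite_digraph (f n)"
    and d: "\<forall>n. hom_img_le (f (Suc n)) (f n) \<and> \<not> hom_img_le (f n) (f (Suc n))"
  shows False
proof -
  define a where "a n = card (fst (f n))" for n
  define e where "e n = card (snd (f n))" for n
  have step: "a (Suc n) < a n \<or> (a (Suc n) = a n \<and> e n < e (Suc n))" for n
  proof -
    obtain \<phi> where ep: "is_epi (f n) (f (Suc n)) \<phi>" using d unfolding hom_img_le_def by blast
    have le: "a (Suc n) \<le> a n" using epi_card[OF _ ep] mem by (simp add: a_def)
    show ?thesis
    proof (cases "a (Suc n) = a n")
      case True
      note r = epi_rev[OF mem[rule_format, of "Suc n"] mem[rule_format, of n] ep True[unfolded a_def]]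
      have "e n \<noteq> e (Suc n)"
      proof
        assume "e n = e (Suc n)"
        then have "strong_hom_img_le (f n) (f (Suc n))" using r(2) by (simp add: e_def)
        then show False using d strong_imp_hom by blast
      qed
      then show ?thesis using r(1) True unfolding e_def by simp
    qed (use le in simp)
  qed
  have amono: "a n \<le> a 0" for n
  proof (induction n)
    case (Suc n) then show ?case using step[of n] by linarith
  qed simp
  have ebound: "e n \<le> a 0 * a 0" for n
  proof -
    have "snd (f n) \<subseteq> fst (f n) \<times> fst (f n)" "finite (fst (f n))" using mem by (auto simp: finite_digraph_def)
    then have "card (snd (f n)) \<le> card (fst (f n) \<times> fst (f n))" by (intro card_mono) auto
    then have "e n \<le> a n * a n" unfolding e_def a_def by (simp add: card_cartesian_product)
    moreover have "a n * a n \<le> a 0 * a 0" using amono[of n] by (simp add: mult_le_mono)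
    ultimately show ?thesis by linarith
  qed
  define g where "g n = (a n, a 0 * a 0 - e n)" for n
  have "(g (Suc n), g n) \<in> less_than <*lex*> less_than" for n
    using step[of n] ebound[of n] ebound[of "Suc n"] unfolding g_def by auto
  moreover have "wf (less_than <*lex*> less_than)" by auto
  ultimately show False unfolding wf_iff_no_infinite_down_chain by blast
qed

lemma no_desc_strong:
  assumes mem: "\<forall>n. finite_digraph (f n)"
    and d: "\<forall>n. strong_hom_img_le (f (Suc n)) (f n) \<and> \<not> strong_hom_img_le (f n) (f (Suc n))"
  shows False
proof -
  have "card (fst (f (Suc n))) < card (fst (f n))" for n
  proof -
    obtain \<phi> where ep: "is_epi (f n) (f (Suc n)) \<phi>" and st: "is_strong_hom (f n) (f (Suc n)) \<phi>"
      using d unfolding strong_hom_img_le_def by blast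
    have le: "card (fst (f (Suc n))) \<le> card (fst (f n))" using epi_card[OF _ ep] mem by simp
    show ?thesis
    proof (rule ccontr)
      assume "\<not> ?thesis"
      then have eq: "card (fst (f (Suc n))) = card (fst (f n))" using le by simp
      note r = epi_rev[OF mem[rule_format, of "Suc n"] mem[rule_format, of n] ep eq]
      have "card (snd (f (Suc n))) \<le> card (snd (f n))"
        using strong_edges[OF mem[rule_format, of "Suc n"] mem[rule_format, of n] ep st] .
      then show False using r d by (meson le_antisym)
    qed
  qed
  then show False using nat_no_desc[of "\<lambda>n. card (fst (f n))"] by blast
qed

lemma classT_valid:
  assumes "D \<in> class_T N"
  shows "\<exists>q. valid N D (fst q) (fst (snd q)) (fst (snd (snd q))) (snd (snd (snd q)))"
proof -
  have "finite_digraph D \<and> (\<exists>De Dc Df. De \<union> Dc \<union> Df = fst D \<and> De \<inter> Dc = {} \<and> De \<inter> Df = {} \<and> Dc \<inter> Df = {} \<and>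
        (\<forall>x\<in>De. \<forall>y\<in>De. x \<noteq> y \<longrightarrow> (x, y) \<notin> snd D) \<and>
        ((\<forall>x\<in>De. (x, x) \<in> snd D) \<or> (\<forall>x\<in>De. (x, x) \<notin> snd D)) \<and>
        (\<forall>x\<in>Dc. \<forall>y\<in>Dc. (x, y) \<in> snd D) \<and>
        card Df \<le> N \<and>
        (\<forall>x\<in>De. \<forall>y\<in>De. \<forall>z\<in>Dc. \<forall>t\<in>Dc.
            ((x, z) \<in> snd D \<longleftrightarrow> (y, t) \<in> snd D) \<and> ((z, x) \<in> snd D \<longleftrightarrow> (t, y) \<in> snd D)))"
    using assms unfolding class_T_def mem_Collect_eq .
  then obtain De Dc Df where fd: "finite_digraph D" and h1: "De \<union> Dc \<union> Df = fst D" and h: "De \<inter> Dc = {} \<and> De \<inter> Df = {} \<and> Dc \<inter> Df = {} \<and>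
        (\<forall>x\<in>De. \<forall>y\<in>De. x \<noteq> y \<longrightarrow> (x, y) \<notin> snd D) \<and>
        ((\<forall>x\<in>De. (x, x) \<in> snd D) \<or> (\<forall>x\<in>De. (x, x) \<notin> snd D)) \<and>
        (\<forall>x\<in>Dc. \<forall>y\<in>Dc. (x, y) \<in> snd D) \<and>
        card Df \<le> N \<and>
        (\<forall>x\<in>De. \<forall>y\<in>De. \<forall>z\<in>Dc. \<forall>t\<in>Dc.
            ((x, z) \<in> snd D \<longleftrightarrow> (y, t) \<in> snd D) \<and> ((z, x) \<in> snd D \<longleftrightarrow> (t, y) \<in> snd D))"
    apply (elim conjE exE)
    apply (rule that)
      apply assumption
     apply assumption
    apply (intro conjI)
           apply assumption+
    done
  have "finite (fst D)" using fd unfolding finite_digraph_def by simp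
  moreover have "Df \<subseteq> fst D" using h1 by auto
  ultimately have "finite Df" by (rule finite_subset[rotated])
  then obtain b where bij: "bij_betw b Df {0..<card Df}" using ex_bij_betw_finite_nat by blast
  have "valid N D De Dc Df b" unfolding valid_def using fd h1 h bij
    apply (elim conjE)
    apply (intro conjI)
    apply assumption+
    done
  then show ?thesis by (intro exI[of _ "(De, Dc, Df, b)"]) simp
qed

lemma tau_in:
  assumes v: "valid N D De Dc Df b"
  shows "tau D Df b u \<in> Pow {0..<N} \<times> Pow {0..<N}"
proof -
  have "b ` Df \<subseteq> {0..<N}" using validD(9,11)[OF v] by (auto simp: bij_betw_def)
  then show ?thesis unfolding tau_def by auto
qed

lemma disc_in:
  assumes v: "valid N D De Dc Df b"
  shows "disc D De Dc Df b \<in> {..N} \<times> Pow ({0..<N} \<times> {0..<N}) \<times> UNIV \<times> UNIV \<times> UNIV \<times>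
     Pow (Pow {0..<N} \<times> Pow {0..<N}) \<times> Pow (Pow {0..<N} \<times> Pow {0..<N})"
proof -
  have "b ` Df \<subseteq> {0..<N}" using validD(9,11)[OF v] by (auto simp: bij_betw_def)
  then have e: "(\<lambda>(u,v). (b u, b v)) ` (snd D \<inter> Df \<times> Df) \<subseteq> {0..<N} \<times> {0..<N}" by auto
  have t: "tau D Df b ` De \<subseteq> Pow {0..<N} \<times> Pow {0..<N}" "tau D Df b ` Dc \<subseteq> Pow {0..<N} \<times> Pow {0..<N}"
    using tau_in[OF v] by blast+
  show ?thesis unfolding disc_def using validD(9)[OF v] e t by simp
qed

lemma antichain_none:
  fixes g :: "nat \<Rightarrow> dgraph"
  assumes mem: "\<forall>n. g n \<in> class_T N"
  shows "\<exists>i j. i \<noteq> j \<and> strong_hom_img_le (g i) (g j)"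
proof -
  have "\<forall>i. \<exists>q. valid N (g i) (fst q) (fst (snd q)) (fst (snd (snd q))) (snd (snd (snd q)))"
    using classT_valid mem by blast
  then obtain Q where Q: "\<forall>i. valid N (g i) (fst (Q i)) (fst (snd (Q i))) (fst (snd (snd (Q i)))) (snd (snd (snd (Q i))))"
    by (rule choice[THEN exE]) blast
  define De where "De i = fst (Q i)" for i
  define Dc where "Dc i = fst (snd (Q i))" for i
  define Df where "Df i = fst (snd (snd (Q i)))" for i
  define b where "b i = snd (snd (snd (Q i)))" for i
  have v: "valid N (g i) (De i) (Dc i) (Df i) (b i)" for i using Q by (simp add: De_def Dc_def Df_def b_def)
  define K where "K = Pow {0..<N} \<times> Pow {0..<N}"
  define dd where "dd i = disc (g i) (De i) (Dc i) (Df i) (b i)" for i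
  define cE where "cE i t = card {u\<in>De i. tau (g i) (Df i) (b i) u = t}" for i t
  define cC where "cC i t = card {u\<in>Dc i. tau (g i) (Df i) (b i) u = t}" for i t
  define col where "col i j = (dd i = dd j, {t\<in>K. cE i t \<le> cE j t}, {t\<in>K. cC i t \<le> cC j t})" for i j :: nat
  define CS where "CS = (UNIV :: bool set) \<times> Pow K \<times> Pow K"
  have finK: "finite K" unfolding K_def by simp
  have finCS: "finite CS" unfolding CS_def using finK by simp
  have colin: "col i j \<in> CS" for i j unfolding col_def CS_def by auto
  obtain h where h: "bij_betw h CS {0..<card CS}" using ex_bij_betw_finite_nat[OF finCS] by blast
  define fc where "fc X = h (col (Min X) (Max X))" for X
  have part: "\<forall>x\<in>(UNIV::nat set). \<forall>y\<in>UNIV. x \<noteq> y \<longrightarrow> fc {x, y} < card CS"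
    using h colin unfolding fc_def bij_betw_def by auto
  obtain Y t0 where Y: "infinite Y" "\<forall>x\<in>Y. \<forall>y\<in>Y. x \<noteq> y \<longrightarrow> fc {x, y} = t0"
    using Ramsey2[OF infinite_UNIV_nat part] by blast
  define e where "e = enumerate Y"
  have eY: "e n \<in> Y" for n unfolding e_def using enumerate_in_set[OF Y(1)] .
  have emono: "m < n \<Longrightarrow> e m < e n" for m n unfolding e_def using enumerate_mono[OF _ Y(1)] .
  have colc: "col (e m) (e n) = col (e 0) (e 1)" if "m < n" for m n
  proof -
    have ne: "e m \<noteq> e n" "e 0 \<noteq> e 1" using emono[OF that] emono[of 0 1] by auto
    have "fc {e m, e n} = t0" using Y(2) eY ne(1) by blast
    moreover have "fc {e 0, e 1} = t0" using Y(2) eY ne(2) by blast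
    ultimately have "fc {e m, e n} = fc {e 0, e 1}" by simp
    moreover have "Min {e m, e n} = e m" "Max {e m, e n} = e n" using emono[OF that] by auto
    moreover have "Min {e 0, e 1} = e 0" "Max {e 0, e 1} = e 1" using emono[of 0 1] by auto
    ultimately have "h (col (e m) (e n)) = h (col (e 0) (e 1))" unfolding fc_def by simp
    moreover have "inj_on h CS" using h unfolding bij_betw_def by blast
    ultimately show ?thesis using colin by (meson inj_onD)
  qed
  obtain \<beta> SE SC where c0: "col (e 0) (e 1) = (\<beta>, SE, SC)" by (cases "col (e 0) (e 1)") auto
  have ddfin: "finite (range (dd \<circ> e))"
  proof (rule finite_subset)
    show "range (dd \<circ> e) \<subseteq> {..N} \<times> Pow ({0..<N} \<times> {0..<N}) \<times> UNIV \<times> UNIV \<times> UNIV \<times>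
     Pow (Pow {0..<N} \<times> Pow {0..<N}) \<times> Pow (Pow {0..<N} \<times> Pow {0..<N})"
      by (intro image_subsetI) (unfold comp_def dd_def, rule disc_in[OF v])
  qed simp
  have \<beta>: \<beta>
  proof (rule ccontr)
    assume nb: "\<not> \<beta>"
    have "inj (dd \<circ> e)"
    proof (rule injI)
      fix m n assume eq: "(dd \<circ> e) m = (dd \<circ> e) n"
      show "m = n"
      proof (rule ccontr)
        assume "m \<noteq> n"
        then consider "m < n" | "n < m" by linarith
        then show False
        proof cases
          case 1 then show False using colc[OF 1] c0 nb eq unfolding col_def by simp
        next
          case 2 then show False using colc[OF 2] c0 nb eq unfolding col_def by simp
        qed
      qed
    qed
    then show False using ddfin finite_imageD infinite_UNIV_nat by blast
  qed
  have SE: "SE = K"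
  proof (rule ccontr)
    assume "SE \<noteq> K"
    moreover have "SE \<subseteq> K" using c0 unfolding col_def by auto
    ultimately obtain t where t: "t \<in> K" "t \<notin> SE" by blast
    have "cE (e (Suc n)) t < cE (e n) t" for n
      using colc[of n "Suc n"] c0 t unfolding col_def by auto
    then show False using nat_no_desc[of "\<lambda>n. cE (e n) t"] by blast
  qed
  have SC: "SC = K"
  proof (rule ccontr)
    assume "SC \<noteq> K"
    moreover have "SC \<subseteq> K" using c0 unfolding col_def by auto
    ultimately obtain t where t: "t \<in> K" "t \<notin> SC" by blast
    have "cC (e (Suc n)) t < cC (e n) t" for n
      using colc[of n "Suc n"] c0 t unfolding col_def by auto
    then show False using nat_no_desc[of "\<lambda>n. cC (e n) t"] by blast
  qed
  have props: "dd (e 0) = dd (e 1)" "\<forall>t\<in>K. cE (e 0) t \<le> cE (e 1) t" "\<forall>t\<in>K. cC (e 0) t \<le> cC (e 1) t"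
    using c0 \<beta> SE SC unfolding col_def by auto
  have outK: "cE i t = 0" "cC i t = 0" if "t \<notin> K" for i t
  proof -
    have x1: "{u\<in>De i. tau (g i) (Df i) (b i) u = t} = {}" and x2: "{u\<in>Dc i. tau (g i) (Df i) (b i) u = t} = {}"
      using tau_in[OF v[of i]] that unfolding K_def by auto
    show "cE i t = 0" unfolding cE_def x1 by simp
    show "cC i t = 0" unfolding cC_def x2 by simp
  qed
  have "strong_hom_img_le (g (e 0)) (g (e 1))"
  proof (rule le_lemma[OF v v])
    show "disc (g (e 0)) (De (e 0)) (Dc (e 0)) (Df (e 0)) (b (e 0)) = disc (g (e 1)) (De (e 1)) (Dc (e 1)) (Df (e 1)) (b (e 1))"
      using props(1) unfolding dd_def .
    show "card {u \<in> De (e 0). tau (g (e 0)) (Df (e 0)) (b (e 0)) u = t} \<le> card {u \<in> De (e 1). tau (g (e 1)) (Df (e 1)) (b (e 1)) u = t}" for t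
      using props(2) outK(1)[of t "e 0"] unfolding cE_def by (cases "t \<in> K") auto
    show "card {u \<in> Dc (e 0). tau (g (e 0)) (Df (e 0)) (b (e 0)) u = t} \<le> card {u \<in> Dc (e 1). tau (g (e 1)) (Df (e 1)) (b (e 1)) u = t}" for t
      using props(3) outK(2)[of t "e 0"] unfolding cC_def by (cases "t \<in> K") auto
  qed
  moreover have "e 0 \<noteq> e 1" using emono[of 0 1] by simp
  ultimately show ?thesis by blast
qed

theorem theorem2p6:
  fixes N :: nat
  shows "wqo_class (class_T N) hom_img_le \<and> wqo_class (class_T N) strong_hom_img_le"
proof -
  have fd: "D \<in> class_T N \<Longrightarrow> finite_digraph D" for D unfolding class_T_def mem_Collect_eq by (rule conjunct1)
  have a1: "\<not> (\<exists>f::nat \<Rightarrow> dgraph. (\<forall>n. f n \<in> class_T N) \<and> (\<forall>n. hom_img_le (f (Suc n)) (f n) \<and> \<not> hom_img_le (f n) (f (Suc n))))"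
  proof
    assume "\<exists>f::nat \<Rightarrow> dgraph. (\<forall>n. f n \<in> class_T N) \<and> (\<forall>n. hom_img_le (f (Suc n)) (f n) \<and> \<not> hom_img_le (f n) (f (Suc n)))"
    then obtain f :: "nat \<Rightarrow> dgraph" where m: "\<forall>n. f n \<in> class_T N" and d: "\<forall>n. hom_img_le (f (Suc n)) (f n) \<and> \<not> hom_img_le (f n) (f (Suc n))" by blast
    have "\<forall>n. finite_digraph (f n)" using m fd by simp
    then show False using d by (rule no_desc_hom)
  qed
  have a2: "\<not> (\<exists>f::nat \<Rightarrow> dgraph. (\<forall>n. f n \<in> class_T N) \<and> (\<forall>n. strong_hom_img_le (f (Suc n)) (f n) \<and> \<not> strong_hom_img_le (f n) (f (Suc n))))"
  proof
    assume "\<exists>f::nat \<Rightarrow> dgraph. (\<forall>n. f n \<in> class_T N) \<and> (\<forall>n. strong_hom_img_le (f (Suc n)) (f n) \<and> \<not> strong_hom_img_le (f n) (f (Suc n)))"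
    then obtain f :: "nat \<Rightarrow> dgraph" where m: "\<forall>n. f n \<in> class_T N" and d: "\<forall>n. strong_hom_img_le (f (Suc n)) (f n) \<and> \<not> strong_hom_img_le (f n) (f (Suc n))" by blast
    have "\<forall>n. finite_digraph (f n)" using m fd by simp
    then show False using d by (rule no_desc_strong)
  qed
  have b2: "\<not> (\<exists>f::nat \<Rightarrow> dgraph. (\<forall>n. f n \<in> class_T N) \<and> (\<forall>i j. i \<noteq> j \<longrightarrow> \<not> strong_hom_img_le (f i) (f j)))"
  proof
    assume "\<exists>f::nat \<Rightarrow> dgraph. (\<forall>n. f n \<in> class_T N) \<and> (\<forall>i j. i \<noteq> j \<longrightarrow> \<not> strong_hom_img_le (f i) (f j))"
    then obtain f :: "nat \<Rightarrow> dgraph" where m: "\<forall>n. f n \<in> class_T N" and d: "\<forall>i j. i \<noteq> j \<longrightarrow> \<not> strong_hom_img_le (f i) (f j)" by blast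
    obtain i j where "i \<noteq> j" "strong_hom_img_le (f i) (f j)" using antichain_none[OF m] by blast
    then show False using d by blast
  qed
  have b1: "\<not> (\<exists>f::nat \<Rightarrow> dgraph. (\<forall>n. f n \<in> class_T N) \<and> (\<forall>i j. i \<noteq> j \<longrightarrow> \<not> hom_img_le (f i) (f j)))"
  proof
    assume "\<exists>f::nat \<Rightarrow> dgraph. (\<forall>n. f n \<in> class_T N) \<and> (\<forall>i j. i \<noteq> j \<longrightarrow> \<not> hom_img_le (f i) (f j))"
    then obtain f :: "nat \<Rightarrow> dgraph" where m: "\<forall>n. f n \<in> class_T N" and d: "\<forall>i j. i \<noteq> j \<longrightarrow> \<not> hom_img_le (f i) (f j)" by blast
    obtain i j where "i \<noteq> j" "strong_hom_img_le (f i) (f j)" using antichain_none[OF m] by blast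
    then show False using d strong_imp_hom by blast
  qed
  show ?thesis unfolding wqo_class_def using a1 a2 b1 b2 by blast
qed

end
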